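(* Let $g$ be a positive integer and $t\ge 1$. Let $t=\sum_{i=1}^m 2^{u_i}$ be the binary expansion of $t$ with $0\le u_1<u_2<\cdots<u_m$, let $s_k=\sum_{i=k}^m 2^{u_i}$ for $k=1,\ldots,m$, and let $u_0=-1$. Then for $s\in\{1,\ldots,t\}$, $h_t(s)=1$ if and only if $s=s_k-j2^u$ for some $k\in\{1,\ldots,m\}$, some integer $u$ with $u_{k-1}<u\le u_k$ and some $j\in\{0,\ldots,g-1\}$ such that $2^u$ is the largest power of $2$ dividing $s$; in particular $j$ is even if $u=u_k$ and odd otherwise. As a consequence, at any time instant $t$ there are at most $\lceil g/2\rceil(\lfloor\log t\rfloor+1)$ segments that are valid and alive.
   Context: $\log$ denotes base-2 logarithm. For a parameter $g$ and integers $s\ge1$, $t\ge1$: write $s=o2^u$ with $o$ odd and $u\ge0$ (so $2^u$ is the largest power of 2 dividing $s$), and set $h_t(s)=1$ if $s\le t<s+g2^u$ and $h_t(s)=0$ otherwise. Markov weights: given switch probabilities $p(t|t')\in(0,1)$ for $1\le t'<t$, let $\{U_t\}$ be the Markov chain with $U_1=1$ and, for $t'<t$, $\Pr(U_t=t\mid U_{t-1}=t')=p(t|t')=1-\Pr(U_t=t'\mid U_{t-1}=t')$. A transition path $T=(t_1,\ldots,t_C;t)$ (with $1<t_1<\cdots<t_C\le t$) corresponds to the realization $(u_1,\ldots,u_t)$ with $u_{k-1}\ne u_k$ exactly for $k\in\{t_1,\ldots,t_C\}$, and the weight is $w_t(T)=\Pr(U_1=u_1,\ldots,U_t=u_t)$.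 The pruned switch probabilities are $\hat p(t|t')=1-h_t(t')(1-p(t|t'))$, and $\hat w_t$ is the weight function obtained from $\hat p$ in the same way. The segments of a path $T\in\mathcal T_t$ are the intervals $[t_c,t_{c+1})$ between consecutive switch points (with $t_0=1$). A segment is alive at time $t$ if it contains $t$, and valid if there is a path $T_t$ with $\hat w_t(T_t)>0$ that contains exactly that segment. *)

theory Defs
  imports Complex_Main "HOL-Computational_Algebra.Primes"
begin

definition h :: "nat \<Rightarrow> nat \<Rightarrow> nat \<Rightarrow> nat" where
  "h g t s = (if s \<le> t \<and> t < s + g * 2 ^ multiplicity (2::nat) s then 1 else 0)"

definition tail_sum :: "(nat \<Rightarrow> nat) \<Rightarrow> nat \<Rightarrow> nat \<Rightarrow> nat" where
  "tail_sum uu m k = (\<Sum>i=k..m. 2 ^ uu i)"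

text \<open>Transition paths up to time t: a path (t_1,...,t_C; t) with 1 < t_1 < ... < t_C \<le> t
  is represented by its set of switch points T \<subseteq> {2..t}.\<close>
definition paths :: "nat \<Rightarrow> nat set set" where
  "paths t = {T. T \<subseteq> {2..t}}"

text \<open>The realization (u_1,...,u_t) of a path: u_k is the last switch point \<le> k (or 1).\<close>
definition realization :: "nat set \<Rightarrow> nat \<Rightarrow> nat" where
  "realization T k = Max (insert 1 {c \<in> T. c \<le> k})"

text \<open>Markov weight w_t(T) = Pr(U_1=u_1,...,U_t=u_t) for the chain with U_1 = 1 and
  Pr(U_k = k | U_{k-1} = t') = q k t', Pr(U_k = t' | U_{k-1} = t') = 1 - q k t'.
  (q k t' stands for the switch probability q(k|t').)\<close>
definition weight :: "(nat \<Rightarrow> nat \<Rightarrow> real) \<Rightarrow> nat \<Rightarrow> nat set \<Rightarrow> real" where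
  "weight q t T = (\<Prod>k\<in>{2..t}. if k \<in> T then q k (realization T (k - 1))
                                   else 1 - q k (realization T (k - 1)))"

definition phat :: "nat \<Rightarrow> (nat \<Rightarrow> nat \<Rightarrow> real) \<Rightarrow> nat \<Rightarrow> nat \<Rightarrow> real" where
  "phat g p t t' = 1 - real (h g t t') * (1 - p t t')"

text \<open>Segments of a path T in paths t: intervals [t_c, t_{c+1}) between consecutive
  points of 1 = t_0 < t_1 < ... < t_C < t_{C+1} = t + 1.\<close>
definition segments :: "nat \<Rightarrow> nat set \<Rightarrow> nat set set" where
  "segments t T = {{a..<b} | a b. a \<in> insert 1 T \<and> b \<in> insert (Suc t) T \<and> a < b
                      \<and> (\<forall>c\<in>T. \<not> (a < c \<and> c < b))}"

definition valid_alive :: "nat \<Rightarrow> (nat \<Rightarrow> nat \<Rightarrow> real) \<Rightarrow> nat \<Rightarrow> nat set set" where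
  "valid_alive g p t = {S. t \<in> S \<and> (\<exists>T\<in>paths t. weight (phat g p) t T > 0 \<and> S \<in> segments t T)}"

end

theory Submission
  imports Defs
begin

lemma tailA:
  fixes uu :: "nat \<Rightarrow> nat" and k m :: nat
  assumes sm: "strict_mono_on {1..m} uu" and k: "k \<in> {1..m}"
  shows "\<exists>c. tail_sum uu m k = 2 ^ uu k + 2 ^ Suc (uu k) * c"
proof -
  have "tail_sum uu m k = 2 ^ uu k + (\<Sum>i=Suc k..m. 2 ^ uu i)"
    unfolding tail_sum_def using k by (simp add: sum.atLeast_Suc_atMost)
  moreover have "(2::nat) ^ Suc (uu k) dvd (\<Sum>i=Suc k..m. 2 ^ uu i)"
  proof (rule dvd_sum)
    fix i assume i: "i \<in> {Suc k..m}"
    have "uu k < uu i" using strict_mono_onD[OF sm, of k i] i k by auto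
    then show "(2::nat) ^ Suc (uu k) dvd 2 ^ uu i" by (intro le_imp_power_dvd) simp
  qed
  ultimately show ?thesis by (auto elim!: dvdE)
qed

lemma sumB:
  fixes uu :: "nat \<Rightarrow> nat" and k m :: nat
  assumes sm: "strict_mono_on {1..m} uu"
  shows "k \<in> {1..m} \<Longrightarrow> (\<Sum>i=1..k. (2::nat) ^ uu i) < 2 ^ Suc (uu k)"
proof (induction k)
  case 0 then show ?case by simp
next
  case (Suc k)
  show ?case
  proof (cases "k = 0")
    case True then show ?thesis by simp
  next
    case False
    then have IH: "(\<Sum>i=1..k. (2::nat) ^ uu i) < 2 ^ Suc (uu k)" using Suc by auto
    have "uu k < uu (Suc k)" using strict_mono_onD[OF sm, of k "Suc k"] Suc False by auto
    then have "(2::nat) ^ Suc (uu k) \<le> 2 ^ uu (Suc k)" by (intro power_increasing) auto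
    then show ?thesis using IH by simp
  qed
qed

lemma splitC:
  fixes uu :: "nat \<Rightarrow> nat" and k m :: nat
  assumes k: "k \<in> {1..m}"
  shows "(\<Sum>i=1..m. (2::nat) ^ uu i) = tail_sum uu m k + (\<Sum>i\<in>{1..<k}. 2 ^ uu i)"
proof -
  have "{1..m} = {1..<k} \<union> {k..m}" using k by auto
  then have "(\<Sum>i=1..m. (2::nat) ^ uu i) = (\<Sum>i\<in>{1..<k}. 2 ^ uu i) + (\<Sum>i=k..m. 2 ^ uu i)"
    by (simp add: sum.union_disjoint ivl_disj_int)
  then show ?thesis unfolding tail_sum_def by simp
qed

lemma lowD:
  fixes uu :: "nat \<Rightarrow> nat" and k m :: nat
  assumes sm: "strict_mono_on {1..m} uu" and k: "k \<in> {1..m}"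
    and u: "k = 1 \<or> uu (k - 1) < u"
  shows "(\<Sum>i\<in>{1..<k}. (2::nat) ^ uu i) < 2 ^ u"
proof (cases "k = 1")
  case True then have "{1..<k} = {}" by simp
  then show ?thesis by simp
next
  case False
  then have "{1..<k} = {1..k-1}" using k by auto
  moreover have "(\<Sum>i=1..k-1. (2::nat) ^ uu i) < 2 ^ Suc (uu (k-1))"
    using sumB[OF sm, of "k-1"] k False by (metis atLeastAtMost_iff diff_le_self le_add1 le_add_diff_inverse le_antisym le_trans not_less_eq_eq plus_1_eq_Suc)
  moreover have "(2::nat) ^ Suc (uu (k-1)) \<le> 2 ^ u" using u False by (intro power_increasing) auto
  ultimately show ?thesis by simp
qed

lemma mult2_facts:
  fixes s :: nat assumes "s \<noteq> 0"
  shows "2 ^ multiplicity 2 s dvd s" "\<not> 2 ^ Suc (multiplicity 2 s) dvd s"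
  using power_dvd_iff_le_multiplicity[of s "2::nat"] assms by (auto simp del: power_Suc)

lemma part2:
  fixes uu :: "nat \<Rightarrow> nat" and k m u j s :: nat
  assumes sm: "strict_mono_on {1..m} uu" and k: "k \<in> {1..m}"
    and u: "u \<le> uu k" and eq: "int s = int (tail_sum uu m k) - int j * 2 ^ u"
    and d1: "2 ^ u dvd s" and d2: "\<not> 2 ^ Suc u dvd s"
  shows "(u = uu k \<longrightarrow> even j) \<and> (u \<noteq> uu k \<longrightarrow> odd j)"
proof -
  obtain c where c: "tail_sum uu m k = 2 ^ uu k + 2 ^ Suc (uu k) * c" using tailA[OF sm k] by blast
  obtain a where a: "s = 2 ^ u * a" using d1 by (auto elim: dvdE)
  have oa: "odd a"
  proof
    assume "even a" then obtain d where "a = 2 * d" by auto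
    then have "s = 2 ^ Suc u * d" using a by simp
    then show False using d2 by simp
  qed
  have pos: "(2::int) ^ u \<noteq> 0" by simp
  show ?thesis
  proof (cases "u = uu k")
    case True
    then have "int (tail_sum uu m k) = 2 ^ u * (1 + 2 * int c)" using c by (simp add: algebra_simps)
    then have "2 ^ u * int a = 2 ^ u * (1 + 2 * int c - int j)" using eq a by (simp add: algebra_simps)
    then have "int a = 1 + 2 * int c - int j" using pos by (metis mult_left_cancel)
    then have "even (int j)" using oa by (metis even_add even_diff even_of_nat odd_one even_mult_iff even_numeral)
    then show ?thesis using True by simp
  next
    case False
    then have "Suc u \<le> uu k" using u by simp
    then have "(2::nat) ^ Suc u dvd tail_sum uu m k" unfolding c
      by (intro dvd_add le_imp_power_dvd dvd_mult2) auto
    then obtain e where "tail_sum uu m k = 2 ^ Suc u * e" by (auto elim: dvdE)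
    then have "int (tail_sum uu m k) = 2 ^ u * (2 * int e)" by (simp add: algebra_simps)
    then have "2 ^ u * int a = 2 ^ u * (2 * int e - int j)" using eq a by (simp add: algebra_simps)
    then have "int a = 2 * int e - int j" using pos by (metis mult_left_cancel)
    then have "odd (int j)" using oa by presburger
    then show ?thesis using False by simp
  qed
qed

lemma part1:
  fixes g t m s :: nat and uu :: "nat \<Rightarrow> nat"
  assumes g_pos: "g > 0" and t_ge: "t \<ge> 1"
    and sm: "strict_mono_on {1..m} uu"
    and binexp: "t = (\<Sum>i=1..m. 2 ^ uu i)"
    and s: "s \<in> {1..t}"
  shows "h g t s = 1 \<longleftrightarrow>
            (\<exists>k\<in>{1..m}. \<exists>u j. (k = 1 \<or> uu (k - 1) < u) \<and> u \<le> uu k \<and> j < g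
               \<and> int s = int (tail_sum uu m k) - int j * 2 ^ u
               \<and> 2 ^ u dvd s \<and> \<not> 2 ^ Suc u dvd s)"
proof
  assume "h g t s = 1"
  then have st: "s \<le> t" and ts: "t < s + g * 2 ^ multiplicity 2 s"
    unfolding h_def by (auto split: if_splits)
  define u where "u = multiplicity 2 s"
  have s0: "s \<noteq> 0" using s by auto
  have d1: "2 ^ u dvd s" and d2: "\<not> 2 ^ Suc u dvd s" using mult2_facts[OF s0] u_def by auto
  have m1: "m \<ge> 1" using t_ge binexp by (cases m) auto
  have "2 ^ u \<le> s" using d1 s0 by (simp add: dvd_imp_le)
  also have "... \<le> t" by (rule st)
  also have "t < 2 ^ Suc (uu m)" using sumB[OF sm, of m] m1 binexp by simp
  finally have "u < Suc (uu m)" by (rule power_less_imp_less_exp[rotated]) simp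
  then have Pm: "m \<in> {1..m} \<and> u \<le> uu m" using m1 by simp
  obtain k where Pk: "k \<in> {1..m} \<and> u \<le> uu k" and least: "\<forall>k'<k. \<not> (k' \<in> {1..m} \<and> u \<le> uu k')"
    using exists_least_iff[of "\<lambda>k. k \<in> {1..m} \<and> u \<le> uu k"] Pm by blast
  have k: "k \<in> {1..m}" and uk: "u \<le> uu k" using Pk by auto
  have kprev: "k = 1 \<or> uu (k - 1) < u"
  proof (cases "k = 1")
    case False
    then have "k - 1 < k" "k - 1 \<in> {1..m}" using k by auto
    then show ?thesis using least by force
  qed simp
  obtain c where c: "tail_sum uu m k = 2 ^ uu k + 2 ^ Suc (uu k) * c" using tailA[OF sm k] by blast
  have "(2::nat) ^ u dvd tail_sum uu m k" unfolding c
    using uk by (intro dvd_add le_imp_power_dvd dvd_mult2) auto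
  then obtain b where b: "tail_sum uu m k = 2 ^ u * b" by (auto elim: dvdE)
  obtain a where a: "s = 2 ^ u * a" using d1 by (auto elim: dvdE)
  define low where "low = (\<Sum>i\<in>{1..<k}. (2::nat) ^ uu i)"
  have tsplit: "t = tail_sum uu m k + low" using splitC[OF k, of uu] binexp low_def by simp
  have lowlt: "low < 2 ^ u" using lowD[OF sm k kprev] low_def by simp
  have ab: "a \<le> b"
  proof (rule ccontr)
    assume "\<not> a \<le> b"
    then have "b + 1 \<le> a" by simp
    then have "2 ^ u * (b + 1) \<le> s" using a by (metis mult_le_mono2)
    then have "tail_sum uu m k + 2 ^ u \<le> s" using b by (simp add: algebra_simps)
    then show False using tsplit lowlt st by simp
  qed
  define j where "j = b - a"
  have tsj: "tail_sum uu m k = s + 2 ^ u * j" unfolding j_def a b using ab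
    by (simp add: diff_mult_distrib2)
  have "t < s + g * 2 ^ u" using ts u_def by simp
  then have "j * 2 ^ u + low < g * 2 ^ u" using tsplit tsj by (simp add: mult.commute)
  then have "j * 2 ^ u < g * 2 ^ u" by linarith
  then have jg: "j < g" by simp
  have "int s = int (tail_sum uu m k) - int j * 2 ^ u" using tsj by simp
  then show "\<exists>k\<in>{1..m}. \<exists>u j. (k = 1 \<or> uu (k - 1) < u) \<and> u \<le> uu k \<and> j < g
               \<and> int s = int (tail_sum uu m k) - int j * 2 ^ u
               \<and> 2 ^ u dvd s \<and> \<not> 2 ^ Suc u dvd s"
    using k kprev uk jg d1 d2 by blast
next
  assume "\<exists>k\<in>{1..m}. \<exists>u j. (k = 1 \<or> uu (k - 1) < u) \<and> u \<le> uu k \<and> j < g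
               \<and> int s = int (tail_sum uu m k) - int j * 2 ^ u
               \<and> 2 ^ u dvd s \<and> \<not> 2 ^ Suc u dvd s"
  then obtain k u j where k: "k \<in> {1..m}" and kprev: "k = 1 \<or> uu (k - 1) < u"
    and jg: "j < g" and eq: "int s = int (tail_sum uu m k) - int j * 2 ^ u"
    and d1: "2 ^ u dvd s" and d2: "\<not> 2 ^ Suc u dvd s" by blast
  have mu: "multiplicity 2 s = u" using multiplicity_eqI[OF d1 d2] .
  define low where "low = (\<Sum>i\<in>{1..<k}. (2::nat) ^ uu i)"
  have tsplit: "t = tail_sum uu m k + low" using splitC[OF k, of uu] binexp low_def by simp
  have lowlt: "low < 2 ^ u" using lowD[OF sm k kprev] low_def by simp
  have it: "int t = int s + int j * 2 ^ u + int low" using tsplit eq by simp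
  moreover have "int j * 2 ^ u \<ge> 0" by simp
  ultimately have st: "s \<le> t" by linarith
  have il: "int low < 2 ^ u" using lowlt by (simp add: of_nat_less_iff[symmetric])
  have "(int j + 1) * 2 ^ u \<le> int g * 2 ^ u" using jg by (intro mult_right_mono) auto
  moreover have "(int j + 1) * 2 ^ u = int j * 2 ^ u + 2 ^ u" by (simp add: algebra_simps)
  ultimately have "int t < int s + int g * 2 ^ u" using it il by linarith
  then have "int t < int (s + g * 2 ^ u)" by simp
  then have "t < s + g * 2 ^ u" by (simp only: of_nat_less_iff)
  then show "h g t s = 1" unfolding h_def using st mu by simp
qed

lemma va_sub:
  fixes g t :: nat assumes g_pos: "g > 0"
  shows "valid_alive g p t \<subseteq> (\<lambda>a. {a..<Suc t}) ` {a\<in>{1..t}. h g t a = 1}"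
proof
  fix S assume "S \<in> valid_alive g p t"
  then obtain T where tS: "t \<in> S" and T: "T \<in> paths t" and w: "weight (phat g p) t T > 0"
    and seg: "S \<in> segments t T" unfolding valid_alive_def by blast
  have Tsub: "T \<subseteq> {2..t}" using T unfolding paths_def by simp
  obtain a b where S: "S = {a..<b}" and a: "a \<in> insert 1 T" and b: "b \<in> insert (Suc t) T"
    and ab: "a < b" and nob: "\<forall>c\<in>T. \<not> (a < c \<and> c < b)"
    using seg unfolding segments_def by blast
  have at: "a \<le> t" "t < b" using tS S by auto
  have bt: "b = Suc t" using b at Tsub by auto
  have a1: "a \<ge> 1" using a Tsub by auto
  have "h g t a = 1"
  proof (cases "a = t")
    case True
    then show ?thesis unfolding h_def using g_pos by simp
  next
    case False
    then have alt: "a < t" using at by simp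
    have tT: "t \<notin> T" using nob alt bt by auto
    have real: "realization T (t - 1) = a"
      unfolding realization_def
    proof (rule Max_eqI)
      show "finite (insert 1 {c \<in> T. c \<le> t - 1})"
        by (rule finite_subset[of _ "{..t}"]) (use alt in auto)
      fix y assume "y \<in> insert 1 {c \<in> T. c \<le> t - 1}"
      then show "y \<le> a"
      proof
        assume "y = 1" then show ?thesis using a1 by simp
      next
        assume "y \<in> {c \<in> T. c \<le> t - 1}"
        then have "y \<in> T" "y < Suc t" by auto
        then show ?thesis using nob bt by (meson not_le)
      qed
    next
      show "a \<in> insert 1 {c \<in> T. c \<le> t - 1}" using a alt by auto
    qed
    have fin: "finite {2..t}" by simp
    have "weight (phat g p) t T \<noteq> 0" using w by simp
    then have "\<forall>k\<in>{2..t}. (if k \<in> T then phat g p k (realization T (k - 1))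
                                   else 1 - phat g p k (realization T (k - 1))) \<noteq> 0"
      unfolding weight_def using prod_zero_iff[OF fin] by blast
    moreover have "t \<in> {2..t}" using a1 alt by auto
    ultimately have "(if t \<in> T then phat g p t (realization T (t - 1))
                                   else 1 - phat g p t (realization T (t - 1))) \<noteq> 0" by blast
    then have "1 - phat g p t a \<noteq> 0" using tT real by simp
    then have "h g t a \<noteq> 0" unfolding phat_def by auto
    then show ?thesis unfolding h_def by (simp split: if_splits)
  qed
  then show "S \<in> (\<lambda>a. {a..<Suc t}) ` {a\<in>{1..t}. h g t a = 1}" using S bt a1 at by auto
qed

lemma odd_count:
  fixes a g :: nat
  shows "card {x. odd x \<and> a \<le> x \<and> x < a + g} \<le> (g + 1) div 2"
proof -
  have "{x. odd x \<and> a \<le> x \<and> x < a + g} \<subseteq> (\<lambda>c. 2 * c + 1) ` {a div 2..<(a + g) div 2}"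
  proof
    fix x assume x: "x \<in> {x. odd x \<and> a \<le> x \<and> x < a + g}"
    then have "x = 2 * (x div 2) + 1" "x div 2 \<in> {a div 2..<(a + g) div 2}" by auto presburger+
    then show "x \<in> (\<lambda>c. 2 * c + 1) ` {a div 2..<(a + g) div 2}" by blast
  qed
  then have "card {x. odd x \<and> a \<le> x \<and> x < a + g} \<le> card ((\<lambda>c. 2 * c + 1) ` {a div 2..<(a + g) div 2})"
    by (intro card_mono) auto
  also have "... \<le> card {a div 2..<(a + g) div 2}" by (rule card_image_le) simp
  also have "... \<le> (g + 1) div 2" by simp
  finally show ?thesis .
qed

lemma count_h:
  fixes g t L :: nat
  assumes tL: "t < 2 ^ Suc L"
  shows "card {a\<in>{1..t}. h g t a = 1} \<le> (L + 1) * ((g + 1) div 2)"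
proof -
  define A where "A = {a\<in>{1..t}. h g t a = 1}"
  define f where "f = (\<lambda>a::nat. (multiplicity 2 a, a div 2 ^ multiplicity 2 a))"
  define B where "B = (\<lambda>u. {x. odd x \<and> t div 2 ^ u + 1 - g \<le> x \<and> x < (t div 2 ^ u + 1 - g) + g})"
  have inj: "inj_on f A"
  proof (rule inj_onI)
    fix a b assume ab: "a \<in> A" "b \<in> A" "f a = f b"
    have "a = 2 ^ multiplicity 2 a * (a div 2 ^ multiplicity 2 a)"
      using multiplicity_dvd[of 2 a] by simp
    also have "... = 2 ^ multiplicity 2 b * (b div 2 ^ multiplicity 2 b)" using ab(3) unfolding f_def by (metis prod.inject)
    also have "... = b" using multiplicity_dvd[of 2 b] by simp
    finally show "a = b" .
  qed
  have sub: "f ` A \<subseteq> Sigma {0..L} B"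
  proof
    fix y assume "y \<in> f ` A"
    then obtain a where a: "a \<in> A" and y: "y = f a" by blast
    define u where "u = multiplicity 2 a"
    define x where "x = a div 2 ^ u"
    have a0: "a \<noteq> 0" and at: "a \<le> t" and ht: "t < a + g * 2 ^ u"
      using a unfolding A_def h_def u_def by (auto split: if_splits)
    have ax: "a = 2 ^ u * x" unfolding x_def u_def using multiplicity_dvd[of 2 a] by simp
    have ox: "odd x" unfolding x_def u_def using multiplicity_decompose[OF a0, of 2] by simp
    have "2 ^ u \<le> a" using ax ox by (cases x) auto
    then have "2 ^ u < (2::nat) ^ Suc L" using at tL by linarith
    then have uL: "u \<le> L" by (simp del: power_Suc)
    have xq: "x \<le> t div 2 ^ u" unfolding x_def using at by (rule div_le_mono)
    have "t < (x + g) * 2 ^ u" using ht ax by (simp add: algebra_simps)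
    then have qx: "t div 2 ^ u < x + g" by (rule less_mult_imp_div_less)
    have "x \<in> B u" unfolding B_def using ox xq qx by auto
    then show "y \<in> Sigma {0..L} B" using y uL unfolding f_def u_def x_def by auto
  qed
  have finB: "finite (B u)" for u unfolding B_def by (rule finite_subset[of _ "{..<t div 2 ^ u + 1 - g + g}"]) auto
  have "card A = card (f ` A)" using card_image[OF inj] by simp
  also have "... \<le> card (Sigma {0..L} B)" using sub finB by (intro card_mono) auto
  also have "... = (\<Sum>u\<in>{0..L}. card (B u))" using finB by (simp add: card_SigmaI)
  also have "... \<le> (\<Sum>u\<in>{0..L}. (g + 1) div 2)" unfolding B_def by (intro sum_mono odd_count)
  also have "... = (L + 1) * ((g + 1) div 2)" by simp
  finally show ?thesis unfolding A_def .
qed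

theorem lemma2:
  fixes g t m :: nat and uu :: "nat \<Rightarrow> nat" and p :: "nat \<Rightarrow> nat \<Rightarrow> real"
  assumes g_pos: "g > 0"
    and t_ge: "t \<ge> 1"
    and uu_mono: "strict_mono_on {1..m} uu"
    and binexp: "t = (\<Sum>i=1..m. 2 ^ uu i)"
    and p_range: "\<forall>tt t'. 1 \<le> t' \<and> t' < tt \<longrightarrow> 0 < p tt t' \<and> p tt t' < 1"
  shows "(\<forall>s\<in>{1..t}. h g t s = 1 \<longleftrightarrow>
            (\<exists>k\<in>{1..m}. \<exists>u j. (k = 1 \<or> uu (k - 1) < u) \<and> u \<le> uu k \<and> j < g
               \<and> int s = int (tail_sum uu m k) - int j * 2 ^ u
               \<and> 2 ^ u dvd s \<and> \<not> 2 ^ Suc u dvd s))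
       \<and> (\<forall>s\<in>{1..t}. \<forall>k\<in>{1..m}. \<forall>u j. (k = 1 \<or> uu (k - 1) < u) \<and> u \<le> uu k \<and> j < g
               \<and> int s = int (tail_sum uu m k) - int j * 2 ^ u
               \<and> 2 ^ u dvd s \<and> \<not> 2 ^ Suc u dvd s
             \<longrightarrow> (u = uu k \<longrightarrow> even j) \<and> (u \<noteq> uu k \<longrightarrow> odd j))
       \<and> real (card (valid_alive g p t))
           \<le> real_of_int (\<lceil>real g / 2\<rceil> * (\<lfloor>log 2 (real t)\<rfloor> + 1))"
proof -
  have sm: "strict_mono_on {1..m} uu" by (rule uu_mono)
  have m1: "m \<ge> 1" using t_ge binexp by (cases m) auto
  have P1: "\<forall>s\<in>{1..t}. h g t s = 1 \<longleftrightarrow>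
            (\<exists>k\<in>{1..m}. \<exists>u j. (k = 1 \<or> uu (k - 1) < u) \<and> u \<le> uu k \<and> j < g
               \<and> int s = int (tail_sum uu m k) - int j * 2 ^ u
               \<and> 2 ^ u dvd s \<and> \<not> 2 ^ Suc u dvd s)"
    using part1[OF g_pos t_ge sm binexp] by blast
  have P2: "\<forall>s\<in>{1..t}. \<forall>k\<in>{1..m}. \<forall>u j. (k = 1 \<or> uu (k - 1) < u) \<and> u \<le> uu k \<and> j < g
               \<and> int s = int (tail_sum uu m k) - int j * 2 ^ u
               \<and> 2 ^ u dvd s \<and> \<not> 2 ^ Suc u dvd s
             \<longrightarrow> (u = uu k \<longrightarrow> even j) \<and> (u \<noteq> uu k \<longrightarrow> odd j)"
    using part2[OF sm] by blast
  have tL: "t < 2 ^ Suc (uu m)" using sumB[OF sm, of m] m1 binexp by simp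
  have "(2::nat) ^ uu m \<le> t" unfolding binexp
    by (rule member_le_sum[where f="\<lambda>i. (2::nat) ^ uu i" and i=m]) (use m1 in auto)
  then have "real (uu m) \<le> log 2 (real t)"
    by (intro le_log_of_power) (simp_all add: of_nat_le_iff[symmetric])
  then have Lf: "int (uu m) \<le> \<lfloor>log 2 (real t)\<rfloor>" by (simp add: le_floor_iff)
  have gc: "int ((g + 1) div 2) \<le> \<lceil>real g / 2\<rceil>"
    by (simp add: le_ceiling_iff)
  define A where "A = {a\<in>{1..t}. h g t a = 1}"
  have finA: "finite A" unfolding A_def by simp
  have "card (valid_alive g p t) \<le> card ((\<lambda>a. {a..<Suc t}) ` A)"
    using va_sub[OF g_pos, of p t] finA unfolding A_def by (intro card_mono) auto
  also have "... \<le> card A" using finA by (rule card_image_le)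
  also have "... \<le> (uu m + 1) * ((g + 1) div 2)" unfolding A_def by (rule count_h[OF tL])
  finally have "int (card (valid_alive g p t)) \<le> int ((uu m + 1) * ((g + 1) div 2))"
    by (simp only: of_nat_le_iff)
  also have "... = int ((g + 1) div 2) * (int (uu m) + 1)" by (simp add: algebra_simps)
  also have "... \<le> \<lceil>real g / 2\<rceil> * (\<lfloor>log 2 (real t)\<rfloor> + 1)"
    using gc Lf by (intro mult_mono) auto
  finally have "real_of_int (int (card (valid_alive g p t)))
      \<le> real_of_int (\<lceil>real g / 2\<rceil> * (\<lfloor>log 2 (real t)\<rfloor> + 1))" by (simp only: of_int_le_iff)
  then have P3: "real (card (valid_alive g p t))
           \<le> real_of_int (\<lceil>real g / 2\<rceil> * (\<lfloor>log 2 (real t)\<rfloor> + 1))" by simp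
  show ?thesis by (intro conjI P1 P2 P3)
qed

end
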